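(* Let $\kappa>0$, $u_0>0$, and let $u$ be the solution of $\frac{d}{dr}\big(u'/\sqrt{1+u'^2}\big)=\kappa u$, $u(0)=u_0$, $u'(0)=0$. Let $a>0$ and $0\le\gamma<\pi/2$ be such that $u$ is defined on $[0,a)$ and $\sin\psi(a)=\cos\gamma$, where $\sin\psi=u'/\sqrt{1+u'^2}$ (extended continuously to $r=a$). Then $$\frac{2(1-\sin\gamma)}{\kappa f(\gamma)}<u(a)-u_0<\frac{a(1-\sin\gamma)}{\cos\gamma},\qquad f(\gamma)=\frac{2\cos\gamma}{\kappa a}-\frac{a\tan\gamma}2+\frac a{2\cos^2\gamma}\Big(\frac\pi2-\gamma\Big).$$
   Context: $u$ is the profile of a $\kappa$-cylindrical capillary surface $z=u(x)$ between vertical plates $x=\pm a$ with contact angle $\gamma$. *)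

theory Defs
  imports "HOL-Analysis.Analysis"
begin

definition cap_f :: "real \<Rightarrow> real \<Rightarrow> real \<Rightarrow> real" where
  "cap_f \<kappa> a \<gamma> = 2 * cos \<gamma> / (\<kappa> * a) - a * tan \<gamma> / 2
      + a / (2 * (cos \<gamma>)\<^sup>2) * (pi / 2 - \<gamma>)"

end

theory Submission
  imports Defs
begin

lemma der_at:
  assumes "(f has_field_derivative d) (at r within {0..<a})" "0 < r" "r < (a::real)"
  shows "(f has_field_derivative d) (at r)"
proof -
  have "r \<in> interior {0..<a}" using assms by simp
  then show ?thesis using assms(1) at_within_interior by metis
qed

lemma cont_on:
  assumes "\<And>r. r \<in> {0..<a} \<Longrightarrow> (f has_field_derivative f' r) (at r within {0..<(a::real)})"
    "0 \<le> x" "y < a"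
  shows "continuous_on {x..y} f"
proof -
  have "continuous_on {0..<a} f"
    unfolding continuous_on_eq_continuous_within
    using assms(1) DERIV_continuous by blast
  then show ?thesis by (rule continuous_on_subset) (use assms in auto)
qed

lemma incr:
  assumes d: "\<And>r. r \<in> {0..<a} \<Longrightarrow> (f has_field_derivative f' r) (at r within {0..<(a::real)})"
    and "0 \<le> x" "x \<le> y" "y < a" and p: "\<And>r. x < r \<Longrightarrow> r < y \<Longrightarrow> f' r \<ge> 0"
  shows "f x \<le> f y"
proof (rule DERIV_nonneg_imp_increasing_open[OF assms(3)])
  show "continuous_on {x..y} f" using cont_on[OF d] assms by blast
  fix r assume "x < r" "r < y"
  then show "\<exists>z. DERIV f r :> z \<and> 0 \<le> z"
    using der_at[OF d[of r]] p[of r] assms by auto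
qed

lemma sincr:
  assumes d: "\<And>r. r \<in> {0..<a} \<Longrightarrow> (f has_field_derivative f' r) (at r within {0..<(a::real)})"
    and "0 \<le> x" "x < y" "y < a" and p: "\<And>r. x < r \<Longrightarrow> r < y \<Longrightarrow> f' r > 0"
  shows "f x < f y"
proof (rule DERIV_pos_imp_increasing_open[OF assms(3)])
  show "continuous_on {x..y} f" using cont_on[OF d] assms by auto
  fix r assume "x < r" "r < y"
  then show "\<exists>z. DERIV f r :> z \<and> 0 < z"
    using der_at[OF d[of r]] p[of r] assms by auto
qed

lemma decr:
  assumes d: "\<And>r. r \<in> {0..<a} \<Longrightarrow> (f has_field_derivative f' r) (at r within {0..<(a::real)})"
    and "0 \<le> x" "x \<le> y" "y < a" and p: "\<And>r. x < r \<Longrightarrow> r < y \<Longrightarrow> f' r \<le> 0"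
  shows "f y \<le> f x"
proof -
  have "(\<lambda>r. - f r) x \<le> (\<lambda>r. - f r) y"
    by (rule incr[where f'="\<lambda>r. - f' r"]) (use assms in \<open>auto intro!: derivative_eq_intros\<close>)
  then show ?thesis by simp
qed

lemma sdecr:
  assumes d: "\<And>r. r \<in> {0..<a} \<Longrightarrow> (f has_field_derivative f' r) (at r within {0..<(a::real)})"
    and "0 \<le> x" "x < y" "y < a" and p: "\<And>r. x < r \<Longrightarrow> r < y \<Longrightarrow> f' r < 0"
  shows "f y < f x"
proof -
  have "(\<lambda>r. - f r) x < (\<lambda>r. - f r) y"
    by (rule sincr[where f'="\<lambda>r. - f' r"]) (use assms in \<open>auto intro!: derivative_eq_intros\<close>)
  then show ?thesis by simp
qed

lemma lim_lower:
  fixes f :: "real \<Rightarrow> real"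
  assumes "(f \<longlongrightarrow> L) (at_left (a::real))" "x < a" "\<And>r. x < r \<Longrightarrow> r < a \<Longrightarrow> c \<le> f r"
  shows "c \<le> L"
proof (rule tendsto_lowerbound[OF assms(1)])
  show "\<forall>\<^sub>F r in at_left a. c \<le> f r"
    using eventually_at_left_real[OF assms(2)] by eventually_elim (use assms in auto)
qed simp

lemma lim_upper:
  fixes f :: "real \<Rightarrow> real"
  assumes "(f \<longlongrightarrow> L) (at_left (a::real))" "x < a" "\<And>r. x < r \<Longrightarrow> r < a \<Longrightarrow> f r \<le> c"
  shows "L \<le> c"
proof (rule tendsto_upperbound[OF assms(1)])
  show "\<forall>\<^sub>F r in at_left a. f r \<le> c"
    using eventually_at_left_real[OF assms(2)] by eventually_elim (use assms in auto)
qed simp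


lemma gsmono:
  fixes v w :: real
  assumes "0 \<le> v" "v < w" "w < 1"
  shows "v / sqrt (1 - v\<^sup>2) < w / sqrt (1 - w\<^sup>2)"
proof -
  have v1: "v\<^sup>2 < 1" using assms by (simp add: abs_square_less_1)
  have w1: "w\<^sup>2 < 1" using assms by (simp add: abs_square_less_1)
  have vw: "v\<^sup>2 < w\<^sup>2" using assms by (intro power_strict_mono) auto
  have "v\<^sup>2 * (1 - w\<^sup>2) < w\<^sup>2 * (1 - v\<^sup>2)" using vw by (simp add: algebra_simps)
  then have "sqrt (v\<^sup>2 * (1 - w\<^sup>2)) < sqrt (w\<^sup>2 * (1 - v\<^sup>2))" by simp
  then have "v * sqrt (1 - w\<^sup>2) < w * sqrt (1 - v\<^sup>2)"
    using assms by (simp add: real_sqrt_mult)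
  moreover have "sqrt (1 - v\<^sup>2) > 0" "sqrt (1 - w\<^sup>2) > 0" using v1 w1 by auto
  ultimately show ?thesis by (simp add: divide_less_eq field_simps)
qed

lemma gmono:
  fixes v w :: real
  assumes "0 \<le> v" "v \<le> w" "w < 1"
  shows "v / sqrt (1 - v\<^sup>2) \<le> w / sqrt (1 - w\<^sup>2)"
  using gsmono[of v w] assms by (cases "v = w") auto

lemma fa_alg:
  fixes cg \<kappa> a sg th :: real
  assumes "cg > 0" "\<kappa> > 0" "a > 0"
  shows "(2 * cg / (\<kappa> * a) - a * (sg / cg) / 2 + a / (2 * cg\<^sup>2) * th) * a
     = 2 * cg / \<kappa> - (a / cg * sg) * a + (a / cg)\<^sup>2 / 2 * (cg * sg + th)"
  using assms by (simp add: field_simps power2_eq_square)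

theorem mainTheorem12:
  fixes u du :: "real \<Rightarrow> real" and \<kappa> u0 a \<gamma> :: real
  assumes "\<kappa> > 0" and "u0 > 0" and "a > 0"
    and "0 \<le> \<gamma>" and "\<gamma> < pi / 2"
    and "\<And>r. r \<in> {0..<a} \<Longrightarrow> (u has_real_derivative du r) (at r within {0..<a})"
    and "\<And>r. r \<in> {0..<a} \<Longrightarrow>
           ((\<lambda>s. du s / sqrt (1 + (du s)\<^sup>2)) has_real_derivative \<kappa> * u r) (at r within {0..<a})"
    and "u 0 = u0" and "du 0 = 0"
    and "((\<lambda>s. du s / sqrt (1 + (du s)\<^sup>2)) \<longlongrightarrow> cos \<gamma>) (at_left a)"
  shows "\<exists>ua. (u \<longlongrightarrow> ua) (at_left a) \<and>
           2 * (1 - sin \<gamma>) / (\<kappa> * cap_f \<kappa> a \<gamma>) < ua - u0 \<and>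
           ua - u0 < a * (1 - sin \<gamma>) / cos \<gamma>"
proof -
  note kp = assms(1) and u0p = assms(2) and ap = assms(3)
  note du_d = assms(6)
  define S where "S = (\<lambda>s. du s / sqrt (1 + (du s)\<^sup>2))"
  define C where "C = (\<lambda>s. sqrt (1 - (S s)\<^sup>2))"
  define cg where "cg = cos \<gamma>"
  define sg where "sg = sin \<gamma>"
  have cg: "cg > 0" unfolding cg_def using assms(4,5) by (intro cos_gt_zero_pi) auto
  have pyth: "sg\<^sup>2 + cg\<^sup>2 = 1" unfolding sg_def cg_def by simp
  have sg0: "0 \<le> sg" unfolding sg_def using assms(4,5) by (intro sin_ge_zero) auto
  have sg1: "sg < 1"
  proof -
    have "sg\<^sup>2 < 1" using pyth cg by (smt (verit) zero_less_power)
    then show ?thesis using sg0 by (smt (verit) one_le_power)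
  qed
  have dS: "\<And>r. r \<in> {0..<a} \<Longrightarrow> (S has_real_derivative \<kappa> * u r) (at r within {0..<a})"
    unfolding S_def using assms(7) by blast
  have S1: "(S x)\<^sup>2 < 1" for x
  proof -
    have "(S x)\<^sup>2 = (du x)\<^sup>2 / (1 + (du x)\<^sup>2)" unfolding S_def
      by (simp add: power_divide)
    also have "\<dots> < 1" by (simp add: divide_less_eq add_pos_nonneg)
    finally show ?thesis .
  qed
  have Cx: "C x = 1 / sqrt (1 + (du x)\<^sup>2)" for x
  proof -
    have h: "1 + (du x)\<^sup>2 > 0" by (simp add: add_pos_nonneg)
    have "1 - (S x)\<^sup>2 = 1 / (1 + (du x)\<^sup>2)" unfolding S_def
      using h by (simp add: power_divide) (simp add: field_simps)
    then show ?thesis unfolding C_def by (simp add: real_sqrt_divide)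
  qed
  have Cpos: "C x > 0" for x unfolding Cx by (simp add: add_pos_nonneg)
  have Cle1: "C x \<le> 1" for x unfolding C_def using S1[of x] by simp
  have duSC: "du x = S x / C x" for x unfolding Cx S_def
    using zero_le_power2[of "du x"] by (simp; smt (verit))
  have dC: "(C has_real_derivative - (\<kappa> * u r * du r)) (at r within {0..<a})" if r: "r \<in> {0..<a}" for r
  proof -
    have "((\<lambda>x. sqrt (1 - (S x)\<^sup>2)) has_real_derivative
            inverse (sqrt (1 - (S r)\<^sup>2)) / 2 * (- (2 * S r * (\<kappa> * u r)))) (at r within {0..<a})"
      using S1[of r] by (auto intro!: derivative_eq_intros dS[OF r])
    moreover have "inverse (sqrt (1 - (S r)\<^sup>2)) / 2 * (- (2 * S r * (\<kappa> * u r))) = - (\<kappa> * u r * du r)"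
      unfolding duSC[of r] C_def by (simp add: field_simps)
    ultimately show ?thesis unfolding C_def by metis
  qed
  have S0: "S 0 = 0" unfolding S_def using assms(9) by simp
  have C0: "C 0 = 1" unfolding C_def S0 by simp
  have energy: "C r + \<kappa> * (u r)\<^sup>2 / 2 = 1 + \<kappa> * u0\<^sup>2 / 2" if r: "r \<in> {0..<a}" for r
  proof -
    have "\<exists>c. \<forall>x\<in>{0..<a}. C x + \<kappa> * (u x)\<^sup>2 / 2 = c"
    proof (rule has_field_derivative_zero_constant)
      fix x assume x: "x \<in> {0..<a}"
      have "((\<lambda>x. C x + \<kappa> * (u x)\<^sup>2 / 2) has_real_derivative
              - (\<kappa> * u x * du x) + \<kappa> * (2 * u x * du x) / 2) (at x within {0..<a})"
        by (auto intro!: derivative_eq_intros dC[OF x] du_d[OF x])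
      then show "((\<lambda>x. C x + \<kappa> * (u x)\<^sup>2 / 2) has_real_derivative 0) (at x within {0..<a})"
        by simp
    qed simp
    then obtain c where c: "\<forall>x\<in>{0..<a}. C x + \<kappa> * (u x)\<^sup>2 / 2 = c" by blast
    have "c = 1 + \<kappa> * u0\<^sup>2 / 2" using c[rule_format, of 0] ap C0 assms(8) by simp
    then show ?thesis using c r by blast
  qed
  have usq: "(u r)\<^sup>2 = u0\<^sup>2 + 2 * (1 - C r) / \<kappa>" if r: "r \<in> {0..<a}" for r
    using energy[OF r] kp by (simp add: field_simps)
  have u_ge: "u r \<ge> u0" if r: "r \<in> {0..<a}" for r
  proof (rule ccontr)
    assume "\<not> u0 \<le> u r"
    have e: "\<kappa> * ((u r)\<^sup>2 - u0\<^sup>2) = 2 * (1 - C r)"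
      using energy[OF r] by (simp add: algebra_simps)
    have "\<kappa> * ((u r)\<^sup>2 - u0\<^sup>2) \<ge> 0" unfolding e using Cle1[of r] by simp
    then have sq: "u0\<^sup>2 \<le> (u r)\<^sup>2" using kp by (simp add: zero_le_mult_iff)
    have neg: "u r \<le> 0"
    proof (rule ccontr)
      assume "\<not> u r \<le> 0"
      then have "(u r)\<^sup>2 < u0\<^sup>2" using \<open>\<not> u0 \<le> u r\<close> by (intro power_strict_mono) auto
      then show False using sq by simp
    qed
    have "continuous_on {0..r} u" using cont_on[OF du_d] r by auto
    then obtain x where x: "0 \<le> x" "x \<le> r" "u x = 0"
      using IVT2'[of u r 0 0] neg assms(8) u0p r by auto
    then have "x \<in> {0..<a}" using r by auto
    from usq[OF this] Cle1[of x] kp u0p x(3) show False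
      by (smt (verit, ccfv_SIG) divide_nonneg_pos power2_eq_square zero_less_power power_zero_numeral)
  qed
  define ua where "ua = sqrt (u0\<^sup>2 + 2 * (1 - sg) / \<kappa>)"
  have u_expr: "u r = sqrt (u0\<^sup>2 + 2 * (1 - C r) / \<kappa>)" if r: "r \<in> {0..<a}" for r
    using usq[OF r] u_ge[OF r] u0p by (metis less_le_trans less_imp_le real_sqrt_unique)
  have S_lim: "(S \<longlongrightarrow> cg) (at_left a)" unfolding S_def cg_def using assms(10) .
  have C_lim: "(C \<longlongrightarrow> sg) (at_left a)"
  proof -
    have "(C \<longlongrightarrow> sqrt (1 - cg\<^sup>2)) (at_left a)" unfolding C_def
      by (intro tendsto_intros S_lim)
    moreover have "sqrt (1 - cg\<^sup>2) = sg" using pyth sg0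
      by (metis add_diff_cancel_right' real_sqrt_unique)
    ultimately show ?thesis by simp
  qed
  have u_lim: "(u \<longlongrightarrow> ua) (at_left a)"
  proof -
    have "((\<lambda>r. sqrt (u0\<^sup>2 + 2 * (1 - C r) / \<kappa>)) \<longlongrightarrow> ua) (at_left a)"
      unfolding ua_def using kp by (intro tendsto_intros C_lim) simp
    moreover have "\<forall>\<^sub>F r in at_left a. sqrt (u0\<^sup>2 + 2 * (1 - C r) / \<kappa>) = u r"
      using eventually_at_left_real[OF ap] by eventually_elim (use u_expr in auto)
    ultimately show ?thesis using Lim_transform_eventually by blast
  qed
  have ua_sq: "ua\<^sup>2 = u0\<^sup>2 + 2 * (1 - sg) / \<kappa>" unfolding ua_def using sg1 kp
    by (intro real_sqrt_pow2) (auto intro!: add_nonneg_nonneg)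

  have upos: "u r > 0" if "r \<in> {0..<a}" for r using u_ge[OF that] u0p by simp
  have S_smono: "S x < S y" if "0 \<le> x" "x < y" "y < a" for x y
    by (rule sincr[OF dS]) (use that upos kp in auto)
  have S_pos: "S r > 0" if "0 < r" "r < a" for r using S_smono[of 0 r] that S0 by simp
  have S_nn: "S r \<ge> 0" if "r \<in> {0..<a}" for r using S_pos[of r] S0 that by (cases "r = 0") auto
  have S_lt1: "S r < 1" for r using S1[of r] by (simp add: abs_square_less_1)
  have dug: "du r = S r / sqrt (1 - (S r)\<^sup>2)" for r using duSC[of r] unfolding C_def .
  have du_pos: "du r > 0" if "0 < r" "r < a" for r using duSC[of r] Cpos[of r] S_pos[OF that] by simp
  have du_nn: "du r \<ge> 0" if "r \<in> {0..<a}" for r using duSC[of r] Cpos[of r] S_nn[OF that] by simp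
  have u_mono: "u x \<le> u y" if "0 \<le> x" "x \<le> y" "y < a" for x y
    by (rule incr[OF du_d]) (use that du_nn in auto)
  have u_smono: "u x < u y" if "0 \<le> x" "x < y" "y < a" for x y
    by (rule sincr[OF du_d]) (use that du_pos in auto)
  have du_smono: "du x < du y" if "0 \<le> x" "x < y" "y < a" for x y
    unfolding dug using S_smono[OF that] S_nn[of x] that S_lt1[of y] by (intro gsmono) auto
  have S_cont: "continuous_on {0..<a} S"
    unfolding continuous_on_eq_continuous_within using dS DERIV_continuous by blast
  have du_cont: "continuous_on {0..<a} du"
  proof -
    have "continuous_on {0..<a} (\<lambda>x. S x / sqrt (1 - (S x)\<^sup>2))"
      using S1 by (intro continuous_intros S_cont) (auto simp: less_le)
    then show ?thesis using dug by simp
  qed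

  define t where "t = (1 - sg) / cg"
  have tpos: "t > 0" unfolding t_def using sg1 cg by simp
  have tcg: "t * cg = 1 - sg" unfolding t_def using cg by simp
  define q where "q = t / sqrt (1 + t\<^sup>2)"
  have q0: "q \<ge> 0" unfolding q_def using tpos by simp
  have tsq: "1 + t\<^sup>2 > 0" by (simp add: add_pos_nonneg)
  have q1: "1 - q\<^sup>2 = 1 / (1 + t\<^sup>2)" unfolding q_def using tsq
    by (simp add: power_divide) (simp add: field_simps)
  have "1 - q\<^sup>2 > 0" unfolding q1 using tsq by simp
  then have "q\<^sup>2 < 1" by simp
  then have qlt1: "q < 1" by (simp add: abs_square_less_1)
  have sq1: "sqrt (1 - q\<^sup>2) = 1 / sqrt (1 + t\<^sup>2)" using q1 by (simp add: real_sqrt_divide)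
  have gq: "q / sqrt (1 - q\<^sup>2) = t" unfolding sq1 using tsq by (simp add: q_def)
  have qcg: "q < cg"
  proof -
    have e1: "(1 - sg) * sg = sg - sg\<^sup>2" by (simp add: power2_eq_square algebra_simps)
    have "(1 - sg) * sg < cg * cg" using pyth sg1 e1 unfolding power2_eq_square by linarith
    then have "t * sg < cg" unfolding t_def using cg by (simp add: divide_less_eq)
    then have "(t * sg)\<^sup>2 < cg\<^sup>2" using tpos sg0 by (intro power_strict_mono) auto
    moreover have "(t * sg)\<^sup>2 = t\<^sup>2 - t\<^sup>2 * cg\<^sup>2"
      using pyth by (simp add: power_mult_distrib algebra_simps flip: eq_diff_eq)
    ultimately have "t\<^sup>2 < cg\<^sup>2 * (1 + t\<^sup>2)" by (simp add: algebra_simps)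
    then have "sqrt (t\<^sup>2) < sqrt (cg\<^sup>2 * (1 + t\<^sup>2))" by (rule real_sqrt_less_mono)
    then have "t < cg * sqrt (1 + t\<^sup>2)" using tpos cg by (simp add: real_sqrt_mult)
    then show ?thesis unfolding q_def using tsq by (simp add: divide_less_eq mult.commute)
  qed
  have "\<exists>r1\<in>{0..<a}. du r1 \<ge> t"
  proof (rule ccontr)
    assume "\<not> ?thesis"
    then have lt: "du r < t" if "r \<in> {0..<a}" for r using that by (auto simp: not_le)
    have "S r \<le> q" if "0 < r" "r < a" for r
    proof (rule ccontr)
      assume "\<not> S r \<le> q"
      then have "q / sqrt (1 - q\<^sup>2) \<le> S r / sqrt (1 - (S r)\<^sup>2)"
        using q0 S_lt1[of r] by (intro gmono) auto
      then show False using lt[of r] that gq dug[of r] by simp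
    qed
    then have "cg \<le> q" using lim_upper[OF S_lim, of 0] ap by auto
    then show False using qcg by simp
  qed
  then obtain r1 where r1: "r1 \<in> {0..<a}" "du r1 \<ge> t" by blast
  obtain rs where rs: "0 \<le> rs" "rs \<le> r1" "du rs = t"
  proof -
    have "continuous_on {0..r1} du" using du_cont by (rule continuous_on_subset) (use r1 in auto)
    then show ?thesis using IVT'[of du 0 t r1] assms(9) tpos r1 that by auto
  qed
  have rs_pos: "rs > 0" using rs assms(9) tpos by (cases "rs = 0") auto
  have rs_a: "rs < a" using rs r1 by auto
  define us where "us = u rs"
  have usp: "us > 0" unfolding us_def using upos rs rs_a by auto
  define Q where "Q = (\<lambda>r. - C r - t * S r)"
  define G where "G = (\<lambda>r. u r - u0 - t * r - (Q r - Q 0) / (\<kappa> * us))"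
  have dG: "(G has_real_derivative (du r - t) * (1 - u r / us)) (at r within {0..<a})"
    if r: "r \<in> {0..<a}" for r
    unfolding G_def Q_def
    apply (rule derivative_eq_intros dC[OF r] dS[OF r] du_d[OF r] refl)+
    using kp usp apply simp
    apply (rule refl)
    using kp usp apply (simp add: field_simps)
    done
  have G'le: "(du r - t) * (1 - u r / us) \<le> 0" if "0 < r" "r < a" for r
  proof (cases "r < rs")
    case True
    then have "du r < t" "u r \<le> us" using du_smono[of r rs] u_mono[of r rs] that rs rs_a
      unfolding us_def by auto
    then show ?thesis using usp by (simp add: mult_nonpos_nonneg)
  next
    case False
    then have "du r \<ge> t" "u r \<ge> us" using du_smono[of rs r] u_mono[of rs r] that rs rs_a
      unfolding us_def by (cases "r = rs"; force)+
    then show ?thesis using usp by (simp add: mult_nonneg_nonpos)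
  qed
  have G'lt: "(du r - t) * (1 - u r / us) < 0" if "0 < r" "r < rs" for r
  proof -
    have "du r < t" "u r < us" using du_smono[of r rs] u_smono[of r rs] that rs rs_a
      unfolding us_def by auto
    then show ?thesis using usp by (simp add: mult_neg_pos)
  qed
  have G0: "G 0 = 0" unfolding G_def using assms(8) by simp
  have Gh: "G (rs / 2) < 0"
    using sdecr[OF dG, of 0 "rs/2"] G'lt rs_pos rs_a G0 by auto
  have G_lim: "(G \<longlongrightarrow> ua - u0 - t * a - ((- sg - t * cg) - Q 0) / (\<kappa> * us)) (at_left a)"
    unfolding G_def Q_def
    apply (rule tendsto_intros u_lim C_lim S_lim)+
    using kp usp apply auto
    done
  have Q0: "Q 0 = -1" unfolding Q_def using C0 S0 by simp
  have "ua - u0 - t * a \<le> G (rs / 2)"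
  proof -
    have "ua - u0 - t * a - ((- sg - t * cg) - Q 0) / (\<kappa> * us) \<le> G (rs / 2)"
    proof (rule lim_upper[OF G_lim, of "rs/2"])
      show "rs / 2 < a" using rs_pos rs_a by simp
      fix r assume r: "rs / 2 < r" "r < a"
      show "G r \<le> G (rs / 2)"
      proof (rule decr[OF dG])
        fix x assume "rs / 2 < x" "x < r"
        then show "(du x - t) * (1 - u x / us) \<le> 0" using G'le r rs_pos by simp
      qed (use r rs_pos in auto)
    qed
    then show ?thesis using Q0 tcg by simp
  qed
  moreover have "a * (1 - sg) / cg = t * a" unfolding t_def by simp
  ultimately have upper: "ua - u0 < a * (1 - sg) / cg" using Gh by linarith

  have cg1: "cg \<le> 1" unfolding cg_def by simp
  define R where "R = a / cg"
  have Rpos: "R > 0" unfolding R_def using ap cg by simp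
  have aR: "a / R = cg" unfolding R_def using ap cg by simp
  have aleR: "a \<le> R" unfolding R_def using ap cg cg1 by (simp add: le_divide_eq)
  have rR1: "r / R < 1" if "r < a" for r using that aleR Rpos by (simp add: divide_less_eq)
  define E where "E = (\<lambda>r. S r - r / R)"
  have dE: "(E has_real_derivative \<kappa> * u r - 1 / R) (at r within {0..<a})" if r: "r \<in> {0..<a}" for r
    unfolding E_def using Rpos by (auto intro!: derivative_eq_intros dS[OF r])
  have E_lim: "(E \<longlongrightarrow> 0) (at_left a)"
  proof -
    have "(E \<longlongrightarrow> cg - a / R) (at_left a)" unfolding E_def
      using Rpos by (intro tendsto_intros S_lim) auto
    then show ?thesis using aR by simp
  qed
  have E0: "E 0 = 0" unfolding E_def S0 by simp
  have E_le: "E r \<le> 0" if r: "r \<in> {0..<a}" for r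
  proof (rule ccontr)
    assume Epos: "\<not> E r \<le> 0"
    then have rpos: "r > 0" using E0 r by (cases "r = 0") auto
    have "\<exists>\<xi>. 0 < \<xi> \<and> \<xi> < r \<and> \<kappa> * u \<xi> - 1 / R > 0"
    proof (rule ccontr)
      assume "\<not> ?thesis"
      then have "E r \<le> E 0" using r rpos by (intro decr[OF dE]) (auto simp: not_less, force)
      then show False using Epos E0 by simp
    qed
    then obtain \<xi> where xi: "0 < \<xi>" "\<xi> < r" "\<kappa> * u \<xi> - 1 / R > 0" by blast
    have "E r \<le> 0"
    proof (rule lim_lower[OF E_lim, of r])
      show "r < a" using r by simp
      fix y assume y: "r < y" "y < a"
      show "E r \<le> E y"
      proof (rule incr[OF dE])
        fix x assume x: "r < x" "x < y"
        have "u \<xi> \<le> u x" using xi x y by (intro u_mono) auto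
        then have "\<kappa> * u \<xi> \<le> \<kappa> * u x" using kp by simp
        then show "0 \<le> \<kappa> * u x - 1 / R" using xi by simp
      qed (use r y in auto)
    qed
    then show False using Epos by simp
  qed
  have du_le: "du r \<le> (r / R) / sqrt (1 - (r / R)\<^sup>2)" if r: "r \<in> {0..<a}" for r
    unfolding dug using E_le[OF r] S_nn[OF r] rR1[of r] r unfolding E_def
    by (intro gmono) auto
  define D where "D = (\<lambda>r. u r + R * sqrt (1 - (r / R)\<^sup>2))"
  have dD: "(D has_real_derivative du r - (r / R) / sqrt (1 - (r / R)\<^sup>2)) (at r within {0..<a})"
    if r: "r \<in> {0..<a}" for r
  proof -
    have lt: "(r / R)\<^sup>2 < 1" using rR1[of r] r Rpos by (simp add: abs_square_less_1)
    have sp: "sqrt (1 - (r / R)\<^sup>2) > 0" using lt by simp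
    show ?thesis unfolding D_def
      using lt Rpos sp apply (auto intro!: derivative_eq_intros du_d[OF r] simp: field_simps)
      by algebra
  qed
  have D_lim: "(D \<longlongrightarrow> ua + R * sg) (at_left a)"
  proof -
    have "(D \<longlongrightarrow> ua + R * sqrt (1 - (a / R)\<^sup>2)) (at_left a)" unfolding D_def
      using Rpos by (intro tendsto_intros u_lim) auto
    moreover have "sqrt (1 - (a / R)\<^sup>2) = sg" unfolding aR using pyth sg0
      by (metis add_diff_cancel_right' real_sqrt_unique)
    ultimately show ?thesis by simp
  qed
  have D_ge: "ua + R * sg \<le> D r" if r: "r \<in> {0..<a}" for r
  proof (rule lim_upper[OF D_lim, of r])
    show "r < a" using r by simp
    fix y assume y: "r < y" "y < a"
    show "D y \<le> D r"
    proof (rule decr[OF dD])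
      fix x assume x: "r < x" "x < y"
      then show "du x - x / R / sqrt (1 - (x / R)\<^sup>2) \<le> 0" using du_le[of x] r y by simp
    qed (use r y in auto)
  qed
  define P where "P = (\<lambda>r. R\<^sup>2 / 2 * ((r / R) * sqrt (1 - (r / R)\<^sup>2) + arcsin (r / R)))"
  have dP: "(P has_real_derivative R * sqrt (1 - (r / R)\<^sup>2)) (at r within {0..<a})"
    if r: "r \<in> {0..<a}" for r
  proof -
    have r1: "r / R < 1" using rR1[of r] r by simp
    have r0: "r / R \<ge> 0" using r Rpos by simp
    have lt: "(r / R)\<^sup>2 < 1" using r1 r0 by (simp add: abs_square_less_1)
    define w where "w = sqrt (1 - (r / R)\<^sup>2)"
    have wpos: "w > 0" unfolding w_def using lt by simp
    have w2: "w\<^sup>2 = 1 - (r / R)\<^sup>2" unfolding w_def using lt by simp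
    show ?thesis unfolding P_def
      using lt r1 r0 Rpos wpos apply (auto intro!: derivative_eq_intros simp: field_simps)
      by algebra
  qed

  define K where "K = (\<lambda>r. 2 * S r / \<kappa> - (ua + R * sg + u0) * r + P r)"
  have dK: "(K has_real_derivative 2 * u r - (ua + R * sg + u0) + R * sqrt (1 - (r / R)\<^sup>2))
      (at r within {0..<a})" if r: "r \<in> {0..<a}" for r
    unfolding K_def using kp by (auto intro!: derivative_eq_intros dS[OF r] dP[OF r])
  have K'pos: "2 * u r - (ua + R * sg + u0) + R * sqrt (1 - (r / R)\<^sup>2) > 0" if r: "0 < r" "r < a" for r
  proof -
    have "u0 < u r" using u_smono[of 0 r] r assms(8) by simp
    moreover have "ua + R * sg \<le> D r" using D_ge[of r] r by simp
    ultimately show ?thesis unfolding D_def by simp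
  qed
  have K0: "K 0 = 0" unfolding K_def P_def S0 by simp
  have Kh: "K (a / 2) > 0" using sincr[OF dK, of 0 "a/2"] K'pos ap K0 by simp
  have P_cont: "continuous_on {0..a} P" unfolding P_def
    using Rpos aleR by (intro continuous_intros) (auto simp: divide_le_eq le_divide_eq)
  have P_lim: "(P \<longlongrightarrow> P a) (at_left a)"
    using P_cont ap unfolding continuous_on_def by (metis at_within_Icc_at_left atLeastAtMost_iff order_refl less_imp_le)
  have arc: "arcsin cg = pi / 2 - \<gamma>"
  proof -
    have "cg = sin (pi / 2 - \<gamma>)" unfolding cg_def by (simp add: cos_sin_eq)
    then show ?thesis using assms(4,5) by (simp add: arcsin_sin)
  qed
  have sq_sg: "sqrt (1 - cg\<^sup>2) = sg" using pyth sg0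
    by (metis add_diff_cancel_right' real_sqrt_unique)
  have Pa: "P a = R\<^sup>2 / 2 * (cg * sg + (pi / 2 - \<gamma>))" unfolding P_def aR sq_sg arc ..
  have K_lim: "(K \<longlongrightarrow> 2 * cg / \<kappa> - (ua + R * sg + u0) * a + P a) (at_left a)"
    unfolding K_def using kp by (intro tendsto_intros S_lim P_lim) auto
  have "K (a / 2) \<le> 2 * cg / \<kappa> - (ua + R * sg + u0) * a + P a"
  proof (rule lim_lower[OF K_lim, of "a/2"])
    show "a / 2 < a" using ap by simp
    fix y assume y: "a / 2 < y" "y < a"
    show "K (a / 2) \<le> K y"
    proof (rule incr[OF dK])
      fix x assume "a / 2 < x" "x < y"
      then show "0 \<le> 2 * u x - (ua + R * sg + u0) + R * sqrt (1 - (x / R)\<^sup>2)"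
        using K'pos[of x] y ap by simp
    qed (use y ap in auto)
  qed
  with Kh have Kpos: "0 < 2 * cg / \<kappa> - (ua + R * sg + u0) * a + P a" by linarith
  have fa: "cap_f \<kappa> a \<gamma> * a = 2 * cg / \<kappa> - (R * sg) * a + P a"
    unfolding Pa cap_f_def R_def tan_def cg_def[symmetric] sg_def[symmetric]
    using fa_alg[OF cg kp ap] .
  have "(ua + u0) * a < cap_f \<kappa> a \<gamma> * a" using Kpos fa by (simp add: algebra_simps)
  then have sumlt: "ua + u0 < cap_f \<kappa> a \<gamma>" using ap by simp
  have ua_ge: "ua \<ge> u0"
  proof -
    have "u0\<^sup>2 \<le> u0\<^sup>2 + 2 * (1 - sg) / \<kappa>" using sg1 kp by simp
    then have "sqrt (u0\<^sup>2) \<le> ua" unfolding ua_def by (rule real_sqrt_le_mono)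
    then show ?thesis using u0p by simp
  qed
  have sumpos: "ua + u0 > 0" using ua_ge u0p by simp
  have diff_eq: "ua - u0 = 2 * (1 - sg) / (\<kappa> * (ua + u0))"
  proof -
    have "(ua - u0) * (ua + u0) = 2 * (1 - sg) / \<kappa>" using ua_sq
      by (simp add: algebra_simps power2_eq_square)
    moreover have "ua + u0 \<noteq> 0" using sumpos by simp
    then have "ua - u0 = ((ua - u0) * (ua + u0)) / (ua + u0)" by simp
    ultimately have "ua - u0 = (2 * (1 - sg) / \<kappa>) / (ua + u0)" by simp
    then show ?thesis by simp
  qed
  have lower: "2 * (1 - sg) / (\<kappa> * cap_f \<kappa> a \<gamma>) < ua - u0"
    unfolding diff_eq
  proof (rule divide_strict_left_mono)
    show "\<kappa> * (ua + u0) < \<kappa> * cap_f \<kappa> a \<gamma>" using sumlt kp by simp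
    show "0 < 2 * (1 - sg)" using sg1 by simp
    show "0 < \<kappa> * cap_f \<kappa> a \<gamma> * (\<kappa> * (ua + u0))" using sumlt sumpos kp by simp
  qed
  show ?thesis using u_lim lower upper unfolding sg_def cg_def by blast
qed

end
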